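(* Let $(S,+)$ be an uncountable semigroup with no idempotent element. Then the following are equivalent: (a) every uncountable IP set $A\subseteq S$ can be partitioned into uncountably many pairwise disjoint sets each of which is an IP set; (b) every uncountable subset of $S$ is an IP set.
   Context: $e$ is idempotent if $e+e=e$. For a sequence $\langle x_n\rangle_{n=1}^\infty$ in $S$, $\mathrm{FS}(\langle x_n\rangle_{n=1}^\infty)$ is the set of all sums $\sum_{n\in H}x_n$ (in increasing order of indices) with $H$ a nonempty finite subset of $\mathbb{N}$. $A\subseteq S$ is an IP set if $\mathrm{FS}(\langle x_n\rangle_{n=1}^\infty)\subseteq A$ for some sequence $\langle x_n\rangle_{n=1}^\infty$ in $S$. *)

theory Defs
  imports Main "HOL-Library.Countable_Set"
begin

fun lsum :: "'a::semigroup_add list \<Rightarrow> 'a" where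
  "lsum [] = undefined"
| "lsum [x] = x"
| "lsum (x # y # xs) = x + lsum (y # xs)"

definition FS :: "(nat \<Rightarrow> 'a::semigroup_add) \<Rightarrow> 'a set" where
  "FS x = {lsum (map x (sorted_list_of_set H)) | H. finite H \<and> H \<noteq> {}}"

definition IP_set :: "'a::semigroup_add set \<Rightarrow> bool" where
  "IP_set A \<longleftrightarrow> (\<exists>x. FS x \<subseteq> A)"

end

theory Submission
  imports Defs
begin

lemma FS_countable: "countable (FS (x::nat \<Rightarrow> 'a::semigroup_add))"
proof -
  have "FS x \<subseteq> (\<lambda>H. lsum (map x (sorted_list_of_set H))) ` Collect finite"
    unfolding FS_def by auto
  moreover have "countable ((\<lambda>H. lsum (map x (sorted_list_of_set H))) ` (Collect finite :: nat set set))"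
    using countable_Collect_finite by (rule countable_image)
  ultimately show ?thesis using countable_subset by blast
qed

lemma FS_nonempty: "FS (x::nat \<Rightarrow> 'a::semigroup_add) \<noteq> {}"
  unfolding FS_def by (auto intro!: exI[of _ "{0}"])

lemma split_uncountable:
  assumes "uncountable (A::'a set)"
  shows "\<exists>P. uncountable P \<and> \<Union>P = A \<and> (\<forall>B\<in>P. uncountable B) \<and>
            (\<forall>B\<in>P. \<forall>C\<in>P. B \<noteq> C \<longrightarrow> B \<inter> C = {})"
proof -
  have inf: "infinite A" using assms countable_finite by blast
  obtain f where f: "bij_betw f (A \<times> A) A"
    using card_of_Times_same_infinite[OF inf] card_of_ordIso[of "A \<times> A" A] by blast
  have inj: "inj_on f (A \<times> A)" and im: "f ` (A \<times> A) = A" using f unfolding bij_betw_def by auto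
  define g where "g a = f ` ({a} \<times> A)" for a
  have disj: "g a \<inter> g b = {}" if "a \<in> A" "b \<in> A" "a \<noteq> b" for a b
    using that inj unfolding g_def inj_on_def by auto
  have gne: "g a \<noteq> {}" if "a \<in> A" for a using that inf unfolding g_def by auto
  have ginj: "inj_on g A"
  proof (rule inj_onI)
    fix a b assume "a \<in> A" "b \<in> A" "g a = g b"
    then show "a = b" using disj gne by fastforce
  qed
  have gunc: "uncountable (g a)" if "a \<in> A" for a
  proof
    assume c: "countable (g a)"
    have "inj_on (\<lambda>y. f (a, y)) A" using inj that unfolding inj_on_def by auto
    moreover have "(\<lambda>y. f (a, y)) ` A = g a" unfolding g_def by auto
    ultimately have "countable A" using c countable_image_inj_on[of "\<lambda>y. f (a, y)" A] by simp
    then show False using assms by blast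
  qed
  show ?thesis
  proof (intro exI conjI ballI impI)
    show "uncountable (g ` A)" using ginj assms countable_image_inj_on[of g A] by blast
    have "\<Union> (g ` A) = f ` (A \<times> A)" unfolding g_def by auto
    then show "\<Union> (g ` A) = A" using im by simp
    show "uncountable B" if "B \<in> g ` A" for B using that gunc by auto
    show "B \<inter> C = {}" if "B \<in> g ` A" "C \<in> g ` A" "B \<noteq> C" for B C
      using that disj by auto
  qed
qed

theorem theorem2p6:
  assumes "uncountable (UNIV :: 'a::semigroup_add set)"
    and "\<forall>e::'a. e + e \<noteq> e"
  shows "(\<forall>A::'a set. uncountable A \<and> IP_set A \<longrightarrow>
            (\<exists>P::'a set set. uncountable P \<and> \<Union>P = A \<and>
                (\<forall>B\<in>P. IP_set B) \<and>
                (\<forall>B\<in>P. \<forall>C\<in>P. B \<noteq> C \<longrightarrow> B \<inter> C = {})))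
     \<longleftrightarrow> (\<forall>A::'a set. uncountable A \<longrightarrow> IP_set A)"
proof
  assume H: "\<forall>A::'a set. uncountable A \<and> IP_set A \<longrightarrow>
            (\<exists>P::'a set set. uncountable P \<and> \<Union>P = A \<and>
                (\<forall>B\<in>P. IP_set B) \<and>
                (\<forall>B\<in>P. \<forall>C\<in>P. B \<noteq> C \<longrightarrow> B \<inter> C = {}))"
  show "\<forall>A::'a set. uncountable A \<longrightarrow> IP_set A"
  proof (intro allI impI)
    fix A :: "'a set" assume uA: "uncountable A"
    define x :: "nat \<Rightarrow> 'a" where "x = (\<lambda>_. undefined)"
    define D where "D = A \<union> FS x"
    have "A \<subseteq> D" unfolding D_def by blast
    then have "uncountable D" using uA countable_subset[of A D] by blast
    moreover have "IP_set D" unfolding IP_set_def D_def by blast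
    ultimately have "uncountable D \<and> IP_set D" by (rule conjI)
    from H[rule_format, OF this] obtain P where P: "uncountable P" "\<Union>P = D" "\<forall>B\<in>P. IP_set B"
       "\<forall>B\<in>P. \<forall>C\<in>P. B \<noteq> C \<longrightarrow> B \<inter> C = {}" by blast
    define Q where "Q = {B\<in>P. B \<inter> FS x \<noteq> {}}"
    define h where "h B = (SOME y. y \<in> B \<inter> FS x)" for B
    have hin: "h B \<in> B \<inter> FS x" if BQ: "B \<in> Q" for B
    proof -
      obtain y where "y \<in> B \<inter> FS x" using BQ unfolding Q_def by blast
      then show ?thesis unfolding h_def by (rule someI)
    qed
    have "inj_on h Q"
    proof (rule inj_onI)
      fix B C assume "B \<in> Q" "C \<in> Q" "h B = h C"
      show "B = C"
      proof (rule ccontr)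
        assume "B \<noteq> C"
        moreover have "B \<in> P" "C \<in> P" using \<open>B \<in> Q\<close> \<open>C \<in> Q\<close> unfolding Q_def by auto
        ultimately have "B \<inter> C = {}" using P(4) by blast
        moreover have "h B \<in> B" "h C \<in> C" using hin \<open>B \<in> Q\<close> \<open>C \<in> Q\<close> by auto
        ultimately show False using \<open>h B = h C\<close> by auto
      qed
    qed
    moreover have "h ` Q \<subseteq> FS x" using hin by blast
    moreover have "countable (h ` Q)" using FS_countable[of x] countable_subset calculation(2) by blast
    ultimately have "countable Q" using countable_image_inj_on[of h Q] by blast
    then have "P \<noteq> Q" using P(1) by blast
    moreover have "Q \<subseteq> P" unfolding Q_def by blast
    ultimately obtain B where "B \<in> P" "B \<notin> Q" by blast
    then have B: "B \<in> P" "B \<inter> FS x = {}" unfolding Q_def by auto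
    then have "B \<subseteq> A" using P(2) unfolding D_def by blast
    moreover obtain y where "FS y \<subseteq> B" using P(3) B unfolding IP_set_def by blast
    ultimately have "FS y \<subseteq> A" by (rule order_trans[rotated])
    then show "IP_set A" unfolding IP_set_def by blast
  qed
next
  assume H: "\<forall>A::'a set. uncountable A \<longrightarrow> IP_set A"
  show "\<forall>A::'a set. uncountable A \<and> IP_set A \<longrightarrow>
            (\<exists>P::'a set set. uncountable P \<and> \<Union>P = A \<and>
                (\<forall>B\<in>P. IP_set B) \<and>
                (\<forall>B\<in>P. \<forall>C\<in>P. B \<noteq> C \<longrightarrow> B \<inter> C = {}))"
  proof (intro allI impI)
    fix A :: "'a set" assume "uncountable A \<and> IP_set A"
    then have "uncountable A" by (rule conjunct1)
    from split_uncountable[OF this] obtain P where P: "uncountable P" "\<Union>P = A" "\<forall>B\<in>P. uncountable B"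
      "\<forall>B\<in>P. \<forall>C\<in>P. B \<noteq> C \<longrightarrow> B \<inter> C = {}" by blast
    have "\<forall>B\<in>P. IP_set B" using P(3) H by blast
    then show "\<exists>P::'a set set. uncountable P \<and> \<Union>P = A \<and>
                (\<forall>B\<in>P. IP_set B) \<and>
                (\<forall>B\<in>P. \<forall>C\<in>P. B \<noteq> C \<longrightarrow> B \<inter> C = {})" using P by blast
  qed
qed

end
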